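(* Let $R$ be a commutative ring, $\delta\in R$, $n\geq 0$. (1) If $x\in X\subseteq\{1,\dots,n\}$ and $n\geq 2$, then $\mathbb 1\otimes_{\mathcal P_n}\mathcal A_{X,x}=0$. (2) If $x\in X\subseteq\{1,\dots,n\}$, then $\mathbb 1\otimes_{\mathcal P_n}\mathcal B_{X,x}=0$. (3) If $Y\subseteq X\subseteq\{1,\dots,n\}$ with $|Y|\geq 2$, then $\mathbb 1\otimes_{\mathcal P_n}\mathcal M_{X,Y}=0$, and $\mathcal M_{X,Y}$ is a direct summand of the left $\mathcal P_n$-module $\mathcal P_n/J_{X-Y}$.
   Context: $\mathcal P_n=\mathcal P_n(R,\delta)$ is the partition algebra: the free $R$-module on set partitions ("diagrams") of $\{-n,\dots,-1,1,\dots,n\}$ (negative = left nodes, positive = right nodes), with product given by stacking (identifying right nodes of the first diagram with left nodes of the second), taking the induced partition on outer nodes, and multiplying by $\delta$ for each component consisting only of middle nodes. The trivial right module $\mathbb 1$ is $R$ with permutation diagrams (all blocks of the form $\{-i,j\}$) acting as the identity and other diagrams as $0$. For $Z\subseteq\{1,\dots,n\}$, $J_Z$ is the left ideal spanned by diagrams in which among the right nodes labelled by $Z$ there is a singleton block or two distinct nodes in the same block. For $Y\subseteq X\subseteq\{1,\dots,n\}$ and $x\in X$, define left submodules of $\mathcal P_n$: $A_x$ spanned by diagrams in which the right node $x$ is a singleton; $B_{X,x}$ spanned by diagrams in which $x$ lies in the same block as some other element of $X$; $M_Y$ spanned by diagrams in which all right nodes in $Y$ lie in one block. Set $\mathcal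 A_{X,x}=A_x/(A_x\cap J_{X-\{x\}})$, $\mathcal B_{X,x}=B_{X,x}/(B_{X,x}\cap J_{X-\{x\}})$, $\mathcal M_{X,Y}=M_Y/(M_Y\cap J_{X-Y})$; in particular $\mathcal M_{X,Y}$ is a submodule of $\mathcal P_n/J_{X-Y}$. *)

theory Defs
  imports "HOL-Library.Disjoint_Sets"
begin

text \<open>Nodes: negative integers -n..-1 are left nodes, positive 1..n right nodes.\<close>
definition nodes :: "nat \<Rightarrow> int set" where
  "nodes n = {- int n .. -1} \<union> {1 .. int n}"

definition Diag :: "nat \<Rightarrow> int set set set" where
  "Diag n = {d. partition_on (nodes n) d}"

text \<open>Stacking d1 on top of d2: vertices tagged by level 0 (outer left = left nodes of d1),
  1 (middle = right nodes of d1 identified with left nodes of d2), 2 (outer right = right nodes of d2).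
  Right node j of d1 and left node -j of d2 both become (1, j).\<close>
definition tagL :: "int \<Rightarrow> nat \<times> int" where
  "tagL i = (if i < 0 then (0, i) else (1, i))"

definition tagR :: "int \<Rightarrow> nat \<times> int" where
  "tagR i = (if i < 0 then (1, - i) else (2, i))"

definition stack_rel :: "int set set \<Rightarrow> int set set \<Rightarrow> ((nat \<times> int) \<times> (nat \<times> int)) set" where
  "stack_rel d1 d2 =
     {(tagL a, tagL b) | a b. \<exists>B\<in>d1. a \<in> B \<and> b \<in> B} \<union>
     {(tagR a, tagR b) | a b. \<exists>B\<in>d2. a \<in> B \<and> b \<in> B}"

definition stack_verts :: "int set set \<Rightarrow> int set set \<Rightarrow> (nat \<times> int) set" where
  "stack_verts d1 d2 = tagL ` \<Union>d1 \<union> tagR ` \<Union>d2"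

definition stack_comps :: "int set set \<Rightarrow> int set set \<Rightarrow> (nat \<times> int) set set" where
  "stack_comps d1 d2 = stack_verts d1 d2 // (stack_rel d1 d2)\<^sup>+"

definition dcomp :: "int set set \<Rightarrow> int set set \<Rightarrow> int set set" where
  "dcomp d1 d2 = {snd ` {v \<in> C. fst v \<noteq> 1} | C. C \<in> stack_comps d1 d2 \<and> (\<exists>v\<in>C. fst v \<noteq> 1)}"

definition dmid :: "int set set \<Rightarrow> int set set \<Rightarrow> nat" where
  "dmid d1 d2 = card {C \<in> stack_comps d1 d2. \<forall>v\<in>C. fst v = 1}"

definition PA :: "nat \<Rightarrow> (int set set \<Rightarrow> 'a::comm_ring_1) set" where
  "PA n = {f. \<forall>d. d \<notin> Diag n \<longrightarrow> f d = 0}"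

definition pzero :: "int set set \<Rightarrow> 'a::comm_ring_1" where
  "pzero = (\<lambda>d. 0)"

definition padd :: "(int set set \<Rightarrow> 'a::comm_ring_1) \<Rightarrow> (int set set \<Rightarrow> 'a) \<Rightarrow> int set set \<Rightarrow> 'a" where
  "padd f g = (\<lambda>d. f d + g d)"

definition pdiff :: "(int set set \<Rightarrow> 'a::comm_ring_1) \<Rightarrow> (int set set \<Rightarrow> 'a) \<Rightarrow> int set set \<Rightarrow> 'a" where
  "pdiff f g = (\<lambda>d. f d - g d)"

definition pscal :: "'a::comm_ring_1 \<Rightarrow> (int set set \<Rightarrow> 'a) \<Rightarrow> int set set \<Rightarrow> 'a" where
  "pscal r f = (\<lambda>d. r * f d)"

definition pmult :: "nat \<Rightarrow> 'a::comm_ring_1 \<Rightarrow> (int set set \<Rightarrow> 'a) \<Rightarrow> (int set set \<Rightarrow> 'a) \<Rightarrow> int set set \<Rightarrow> 'a" where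
  "pmult n \<delta> f g = (\<lambda>d. \<Sum>(d1, d2) \<in> {(d1, d2). d1 \<in> Diag n \<and> d2 \<in> Diag n \<and> dcomp d1 d2 = d}.
                          f d1 * g d2 * \<delta> ^ dmid d1 d2)"

definition is_perm_diag :: "nat \<Rightarrow> int set set \<Rightarrow> bool" where
  "is_perm_diag n d \<longleftrightarrow> (\<forall>B\<in>d. \<exists>i j. 1 \<le> i \<and> i \<le> int n \<and> 1 \<le> j \<and> j \<le> int n \<and> B = {- i, j})"

text \<open>The action of a on the generator 1 of the trivial right module.\<close>
definition eps :: "nat \<Rightarrow> (int set set \<Rightarrow> 'a::comm_ring_1) \<Rightarrow> 'a" where
  "eps n f = (\<Sum>d \<in> {d \<in> Diag n. is_perm_diag n d}. f d)"

definition rsubmod :: "nat \<Rightarrow> (int set set \<Rightarrow> 'a::comm_ring_1) set \<Rightarrow> bool" where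
  "rsubmod n V \<longleftrightarrow> V \<subseteq> PA n \<and> pzero \<in> V \<and> (\<forall>u\<in>V. \<forall>v\<in>V. padd u v \<in> V)
      \<and> (\<forall>r. \<forall>u\<in>V. pscal r u \<in> V)"

definition rspan :: "nat \<Rightarrow> (int set set \<Rightarrow> 'a::comm_ring_1) set \<Rightarrow> (int set set \<Rightarrow> 'a) set" where
  "rspan n S = \<Inter>{V. rsubmod n V \<and> S \<subseteq> V}"

definition left_submod :: "nat \<Rightarrow> 'a::comm_ring_1 \<Rightarrow> (int set set \<Rightarrow> 'a) set \<Rightarrow> bool" where
  "left_submod n \<delta> C \<longleftrightarrow> rsubmod n C \<and> (\<forall>a\<in>PA n. \<forall>c\<in>C. pmult n \<delta> a c \<in> C)"

definition setplus :: "(int set set \<Rightarrow> 'a::comm_ring_1) set \<Rightarrow> (int set set \<Rightarrow> 'a) set \<Rightarrow> (int set set \<Rightarrow> 'a) set" where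
  "setplus U V = {padd u v | u v. u \<in> U \<and> v \<in> V}"

text \<open>R-span of the diagrams satisfying P (the free module is the set of finitely
  supported coefficient functions, so this is the set of functions supported on them).\<close>
definition dspan :: "nat \<Rightarrow> (int set set \<Rightarrow> bool) \<Rightarrow> (int set set \<Rightarrow> 'a::comm_ring_1) set" where
  "dspan n P = {f \<in> PA n. \<forall>d. f d \<noteq> 0 \<longrightarrow> P d}"

text \<open>For left submodules N \<subseteq> M of P_n:  1 \<otimes>_{P_n} (M/N) = 0.
  Since 1 = R with right action x.a = x eps(a), the tensor product
  1 \<otimes>_{P_n} L is L modulo the R-span of all a.l - eps(a) l; for L = M/N this says
  M = N + span{a.m - eps(a) m | a \<in> P_n, m \<in> M}.\<close>
definition triv_tensor_quot_zero ::
  "nat \<Rightarrow> 'a::comm_ring_1 \<Rightarrow> (int set set \<Rightarrow> 'a) set \<Rightarrow> (int set set \<Rightarrow> 'a) set \<Rightarrow> bool" where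
  "triv_tensor_quot_zero n \<delta> M N \<longleftrightarrow>
     M \<subseteq> setplus N (rspan n {pdiff (pmult n \<delta> a m) (pscal (eps n a) m) | a m. a \<in> PA n \<and> m \<in> M})"

text \<open>The image (M + J)/J of M in P_n/J is a direct summand of the left module P_n/J:
  there is a left submodule C/J of P_n/J (i.e. a left submodule C of P_n containing J)
  with P_n/J = (M+J)/J + C/J and (M+J)/J \<inter> C/J = 0.\<close>
definition direct_summand_quot :: "nat \<Rightarrow> 'a::comm_ring_1 \<Rightarrow> (int set set \<Rightarrow> 'a) set \<Rightarrow> (int set set \<Rightarrow> 'a) set \<Rightarrow> bool" where
  "direct_summand_quot n \<delta> M J \<longleftrightarrow>
     (\<exists>C. left_submod n \<delta> C \<and> J \<subseteq> C
        \<and> (\<forall>f\<in>PA n. \<exists>m\<in>M. \<exists>c\<in>C. pdiff f (padd m c) \<in> J)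
        \<and> (\<forall>m\<in>M. m \<in> C \<longrightarrow> m \<in> J))"

definition J_mod :: "nat \<Rightarrow> nat set \<Rightarrow> (int set set \<Rightarrow> 'a::comm_ring_1) set" where
  "J_mod n Z = dspan n (\<lambda>d. (\<exists>z\<in>Z. {int z} \<in> d)
                           \<or> (\<exists>z1\<in>Z. \<exists>z2\<in>Z. z1 \<noteq> z2 \<and> (\<exists>B\<in>d. int z1 \<in> B \<and> int z2 \<in> B)))"

definition A_mod :: "nat \<Rightarrow> nat \<Rightarrow> (int set set \<Rightarrow> 'a::comm_ring_1) set" where
  "A_mod n x = dspan n (\<lambda>d. {int x} \<in> d)"

definition B_mod :: "nat \<Rightarrow> nat set \<Rightarrow> nat \<Rightarrow> (int set set \<Rightarrow> 'a::comm_ring_1) set" where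
  "B_mod n X x = dspan n (\<lambda>d. \<exists>y\<in>X. y \<noteq> x \<and> (\<exists>B\<in>d. int x \<in> B \<and> int y \<in> B))"

definition M_mod :: "nat \<Rightarrow> nat set \<Rightarrow> (int set set \<Rightarrow> 'a::comm_ring_1) set" where
  "M_mod n Y = dspan n (\<lambda>d. \<exists>B\<in>d. int ` Y \<subseteq> B)"

end

theory Submission
  imports Defs
begin

definition sbrel :: "int set set \<Rightarrow> (int \<times> int) set" where
  "sbrel d = {(x,y). \<exists>p\<in>d. x \<in> p \<and> y \<in> p}"

lemma quot_sbrel:
  assumes "equiv A r" shows "sbrel (A // r) = r"
proof
  show "sbrel (A // r) \<subseteq> r"
    using in_quotient_imp_in_rel[OF assms] by (auto simp: sbrel_def)
  show "r \<subseteq> sbrel (A // r)"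
  proof
    fix p assume p: "p \<in> r"
    obtain x y where xy: "p = (x,y)" by force
    have "x \<in> A" using assms p xy by (auto simp: equiv_def refl_on_def)
    then have "r``{x} \<in> A//r" by (rule quotientI)
    moreover have "x \<in> r``{x}" using equiv_class_self[OF assms \<open>x\<in>A\<close>] .
    moreover have "y \<in> r``{x}" using p xy by auto
    ultimately show "p \<in> sbrel (A // r)" using xy by (auto simp: sbrel_def)
  qed
qed

lemma diag_part: "d \<in> Diag n \<Longrightarrow> partition_on (nodes n) d"
  by (simp add: Diag_def)

lemma diag_equiv: "d \<in> Diag n \<Longrightarrow> equiv (nodes n) (sbrel d)"
  unfolding sbrel_def by (rule equiv_partition_on) (simp add: Diag_def)

lemma diag_quot: "d \<in> Diag n \<Longrightarrow> nodes n // sbrel d = d"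
  unfolding sbrel_def by (rule partition_on_eq_quotient) (simp add: Diag_def)

lemma diag_eqI: "d \<in> Diag n \<Longrightarrow> d' \<in> Diag n \<Longrightarrow> sbrel d = sbrel d' \<Longrightarrow> d = d'"
  by (metis diag_quot)

lemma quot_Diag: "equiv (nodes n) r \<Longrightarrow> nodes n // r \<in> Diag n"
  by (simp add: Diag_def partition_on_quotient)

lemma Union_diag: "d \<in> Diag n \<Longrightarrow> \<Union>d = nodes n"
  by (simp add: Diag_def partition_on_def)

lemma sbrel_nodes: "d \<in> Diag n \<Longrightarrow> (u,v) \<in> sbrel d \<Longrightarrow> u \<in> nodes n \<and> v \<in> nodes n"
  using Union_diag by (fastforce simp: sbrel_def)

lemma sbrel_refl: "d \<in> Diag n \<Longrightarrow> u \<in> nodes n \<Longrightarrow> (u,u) \<in> sbrel d"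
  using Union_diag by (fastforce simp: sbrel_def)

lemma sbrel_sym: "(u,v) \<in> sbrel d \<Longrightarrow> (v,u) \<in> sbrel d"
  by (auto simp: sbrel_def)

lemma sbrel_trans: "d \<in> Diag n \<Longrightarrow> (u,v) \<in> sbrel d \<Longrightarrow> (v,w) \<in> sbrel d \<Longrightarrow> (u,w) \<in> sbrel d"
  using diag_equiv by (meson equivE transE)

lemma finite_nodes: "finite (nodes n)"
  by (simp add: nodes_def)

lemma finite_Diag: "finite (Diag n)"
proof -
  have "Diag n \<subseteq> Pow (Pow (nodes n))"
    by (auto simp: Diag_def partition_on_def)
  then show ?thesis by (rule finite_subset) (simp add: finite_nodes)
qed

lemma nodes_iff: "u \<in> nodes n \<longleftrightarrow> (- int n \<le> u \<and> u \<le> -1) \<or> (1 \<le> u \<and> u \<le> int n)"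
  by (auto simp: nodes_def)

definition tagO :: "int \<Rightarrow> nat \<times> int" where
  "tagO u = (if u < 0 then (0,u) else (2,u))"

abbreviation SR where "SR d1 d2 \<equiv> stack_rel d1 d2"
abbreviation RR where "RR d1 d2 \<equiv> (stack_rel d1 d2)\<^sup>+"

definition Rn :: "nat \<Rightarrow> int set set \<Rightarrow> int set set \<Rightarrow> (int \<times> int) set" where
  "Rn n d1 d2 = {(u,v). u \<in> nodes n \<and> v \<in> nodes n \<and> (tagO u, tagO v) \<in> RR d1 d2}"

lemma SR_iff: "(p,q) \<in> SR d1 d2 \<longleftrightarrow>
   (\<exists>a b. p = tagL a \<and> q = tagL b \<and> (a,b) \<in> sbrel d1) \<or> (\<exists>a b. p = tagR a \<and> q = tagR b \<and> (a,b) \<in> sbrel d2)"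
  by (auto simp: stack_rel_def sbrel_def)

lemma SR_L: "(a,b) \<in> sbrel d1 \<Longrightarrow> (tagL a, tagL b) \<in> SR d1 d2"
  by (auto simp: SR_iff)
lemma SR_R: "(a,b) \<in> sbrel d2 \<Longrightarrow> (tagR a, tagR b) \<in> SR d1 d2"
  by (auto simp: SR_iff)

lemma verts_eq: "d1 \<in> Diag n \<Longrightarrow> d2 \<in> Diag n \<Longrightarrow> stack_verts d1 d2 = tagL ` nodes n \<union> tagR ` nodes n"
  by (simp add: stack_verts_def Union_diag)

lemma verts_iff: "d1 \<in> Diag n \<Longrightarrow> d2 \<in> Diag n \<Longrightarrow> v \<in> stack_verts d1 d2 \<longleftrightarrow>
   (fst v = 0 \<and> - int n \<le> snd v \<and> snd v \<le> -1) \<or> ((fst v = 1 \<or> fst v = 2) \<and> 1 \<le> snd v \<and> snd v \<le> int n)"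
proof -
  assume a: "d1 \<in> Diag n" "d2 \<in> Diag n"
  obtain k j where v: "v = (k,j)" by force
  have "v \<in> tagL ` nodes n \<union> tagR ` nodes n \<longleftrightarrow>
     (k = 0 \<and> - int n \<le> j \<and> j \<le> -1) \<or> ((k = 1 \<or> k = 2) \<and> 1 \<le> j \<and> j \<le> int n)"
  proof
    assume "v \<in> tagL ` nodes n \<union> tagR ` nodes n"
    then show "(k = 0 \<and> - int n \<le> j \<and> j \<le> -1) \<or> ((k = 1 \<or> k = 2) \<and> 1 \<le> j \<and> j \<le> int n)"
      using v by (auto simp: tagL_def tagR_def nodes_iff split: if_splits)
  next
    assume h: "(k = 0 \<and> - int n \<le> j \<and> j \<le> -1) \<or> ((k = 1 \<or> k = 2) \<and> 1 \<le> j \<and> j \<le> int n)"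
    show "v \<in> tagL ` nodes n \<union> tagR ` nodes n"
    proof -
      { assume "k = 0 \<and> - int n \<le> j \<and> j \<le> -1"
        then have "v = tagL j" "j \<in> nodes n" using v by (auto simp: tagL_def nodes_iff)
        then have ?thesis by blast }
      moreover
      { assume "k = 1 \<and> 1 \<le> j \<and> j \<le> int n"
        then have "v = tagL j" "j \<in> nodes n" using v by (auto simp: tagL_def nodes_iff)
        then have ?thesis by blast }
      moreover
      { assume "k = 2 \<and> 1 \<le> j \<and> j \<le> int n"
        then have "v = tagR j" "j \<in> nodes n" using v by (auto simp: tagR_def nodes_iff)
        then have ?thesis by blast }
      ultimately show ?thesis using h by blast
    qed
  qed
  then show ?thesis using v by (simp add: verts_eq[OF a])
qed

lemma SR_verts: "d1 \<in> Diag n \<Longrightarrow> d2 \<in> Diag n \<Longrightarrow> SR d1 d2 \<subseteq> stack_verts d1 d2 \<times> stack_verts d1 d2"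
proof
  fix pq assume a: "d1 \<in> Diag n" "d2 \<in> Diag n" and pq: "pq \<in> SR d1 d2"
  obtain p q where e: "pq = (p,q)" by (meson surj_pair)
  show "pq \<in> stack_verts d1 d2 \<times> stack_verts d1 d2"
    using pq unfolding e SR_iff verts_eq[OF a]
    by (elim disjE exE conjE) (use sbrel_nodes[OF a(1)] sbrel_nodes[OF a(2)] in blast)+
qed

lemma SR_refl: "d1 \<in> Diag n \<Longrightarrow> d2 \<in> Diag n \<Longrightarrow> v \<in> stack_verts d1 d2 \<Longrightarrow> (v,v) \<in> SR d1 d2"
  unfolding verts_eq
  by (elim UnE imageE) (use sbrel_refl SR_L SR_R in blast)+

lemma SR_sym: "sym (SR d1 d2)"
  unfolding sym_def
proof (intro allI impI)
  fix p q assume "(p,q) \<in> SR d1 d2"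
  then show "(q,p) \<in> SR d1 d2" unfolding SR_iff using sbrel_sym by blast
qed

lemma RR_equiv: "d1 \<in> Diag n \<Longrightarrow> d2 \<in> Diag n \<Longrightarrow> equiv (stack_verts d1 d2) (RR d1 d2)"
proof -
  assume a: "d1 \<in> Diag n" "d2 \<in> Diag n"
  have sub: "RR d1 d2 \<subseteq> stack_verts d1 d2 \<times> stack_verts d1 d2"
    using SR_verts[OF a] trancl_subset_Sigma by blast
  have "refl_on (stack_verts d1 d2) (RR d1 d2)"
    unfolding refl_on_def using sub SR_refl[OF a] by blast
  moreover have "sym (RR d1 d2)" using SR_sym sym_trancl by blast
  moreover have "trans (RR d1 d2)" by simp
  ultimately show ?thesis using sub by (intro equivI)
qed

lemma RR_sub: "d1 \<in> Diag n \<Longrightarrow> d2 \<in> Diag n \<Longrightarrow> (p,q) \<in> RR d1 d2 \<Longrightarrow> p \<in> stack_verts d1 d2 \<and> q \<in> stack_verts d1 d2"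
  using RR_equiv equiv_type by blast

lemma tagO_verts: "d1 \<in> Diag n \<Longrightarrow> d2 \<in> Diag n \<Longrightarrow> u \<in> nodes n \<Longrightarrow> tagO u \<in> stack_verts d1 d2"
  by (auto simp: verts_iff tagO_def nodes_iff)

lemma outer_tagO: "d1 \<in> Diag n \<Longrightarrow> d2 \<in> Diag n \<Longrightarrow> v \<in> stack_verts d1 d2 \<Longrightarrow> fst v \<noteq> 1 \<Longrightarrow>
   snd v \<in> nodes n \<and> tagO (snd v) = v"
  by (cases v) (auto simp: verts_iff tagO_def nodes_iff)

lemma fst_tagO: "fst (tagO u) \<noteq> 1" and snd_tagO: "snd (tagO u) = u"
  by (auto simp: tagO_def)

lemma fst_tagO': "fst (tagO u) \<noteq> Suc 0"
  by (auto simp: tagO_def)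

lemma Rn_equiv: "d1 \<in> Diag n \<Longrightarrow> d2 \<in> Diag n \<Longrightarrow> equiv (nodes n) (Rn n d1 d2)"
  apply (rule equivI)
  subgoal unfolding Rn_def by auto
  subgoal unfolding refl_on_def Rn_def using RR_equiv[of d1 n d2] tagO_verts[of d1 n d2]
    by (auto elim!: equivE simp: refl_on_def)
  subgoal unfolding Rn_def by (rule symI) (auto intro: symD[OF sym_trancl[OF SR_sym]])
  subgoal unfolding trans_def Rn_def by auto
  done

lemma dcomp_quot:
  assumes a: "d1 \<in> Diag n" "d2 \<in> Diag n"
  shows "dcomp d1 d2 = nodes n // Rn n d1 d2"
proof -
  have E: "equiv (stack_verts d1 d2) (RR d1 d2)" using RR_equiv[OF a] .
  have cls: "snd ` {v \<in> RR d1 d2 `` {tagO u}. fst v \<noteq> 1} = Rn n d1 d2 `` {u}" if u: "u \<in> nodes n" for u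
  proof
    show "snd ` {v \<in> RR d1 d2 `` {tagO u}. fst v \<noteq> 1} \<subseteq> Rn n d1 d2 `` {u}"
    proof
      fix w assume "w \<in> snd ` {v \<in> RR d1 d2 `` {tagO u}. fst v \<noteq> 1}"
      then obtain v where v: "(tagO u, v) \<in> RR d1 d2" "fst v \<noteq> 1" "w = snd v" by auto
      then have "v \<in> stack_verts d1 d2" using RR_sub[OF a] by blast
      then have "w \<in> nodes n" "tagO w = v" using outer_tagO[OF a] v by auto
      then show "w \<in> Rn n d1 d2 `` {u}" using u v by (auto simp: Rn_def)
    qed
    show "Rn n d1 d2 `` {u} \<subseteq> snd ` {v \<in> RR d1 d2 `` {tagO u}. fst v \<noteq> 1}"
    proof
      fix w assume "w \<in> Rn n d1 d2 `` {u}"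
      then have "(tagO u, tagO w) \<in> RR d1 d2" by (auto simp: Rn_def)
      then show "w \<in> snd ` {v \<in> RR d1 d2 `` {tagO u}. fst v \<noteq> 1}"
        by (intro image_eqI[of _ _ "tagO w"]) (auto simp: snd_tagO fst_tagO fst_tagO')
    qed
  qed
  show ?thesis
  proof
    show "dcomp d1 d2 \<subseteq> nodes n // Rn n d1 d2"
    proof
      fix p assume "p \<in> dcomp d1 d2"
      then obtain C where C: "C \<in> stack_comps d1 d2" "\<exists>v\<in>C. fst v \<noteq> 1" "p = snd ` {v \<in> C. fst v \<noteq> 1}"
        unfolding dcomp_def by blast
      then obtain v where v: "v \<in> C" "fst v \<noteq> 1" by blast
      have Cq: "C \<in> stack_verts d1 d2 // RR d1 d2" using C by (simp add: stack_comps_def)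
      then have "v \<in> stack_verts d1 d2" using v in_quotient_imp_subset[OF E] by blast
      then have u: "snd v \<in> nodes n" "tagO (snd v) = v" using outer_tagO[OF a] v by auto
      obtain w where w: "C = RR d1 d2 `` {w}" "w \<in> stack_verts d1 d2" using Cq by (rule quotientE)
      have "C = RR d1 d2 `` {v}" using w v equiv_class_eq[OF E, of w v] by simp
      then have "p = Rn n d1 d2 `` {snd v}" using cls[OF u(1)] u C(3) by simp
      then show "p \<in> nodes n // Rn n d1 d2" using u by (simp add: quotientI)
    qed
    show "nodes n // Rn n d1 d2 \<subseteq> dcomp d1 d2"
    proof
      fix p assume "p \<in> nodes n // Rn n d1 d2"
      then obtain u where u: "u \<in> nodes n" "p = Rn n d1 d2 `` {u}" by (auto elim: quotientE)
      let ?C = "RR d1 d2 `` {tagO u}"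
      have "?C \<in> stack_comps d1 d2" unfolding stack_comps_def
        using tagO_verts[OF a u(1)] by (rule quotientI)
      moreover have "tagO u \<in> ?C" using equiv_class_self[OF E tagO_verts[OF a u(1)]] .
      ultimately show "p \<in> dcomp d1 d2" unfolding dcomp_def using cls[OF u(1)] u(2) fst_tagO
        by blast
    qed
  qed
qed

lemma dcomp_Diag: "d1 \<in> Diag n \<Longrightarrow> d2 \<in> Diag n \<Longrightarrow> dcomp d1 d2 \<in> Diag n"
  by (simp add: dcomp_quot quot_Diag Rn_equiv)

lemma sbrel_dcomp: "d1 \<in> Diag n \<Longrightarrow> d2 \<in> Diag n \<Longrightarrow> sbrel (dcomp d1 d2) = Rn n d1 d2"
  by (simp add: dcomp_quot quot_sbrel Rn_equiv)

lemma tagO_pos: "0 \<le> u \<Longrightarrow> tagO u = (2,u)" and tagO_neg: "u < 0 \<Longrightarrow> tagO u = (0,u)"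
  by (auto simp: tagO_def)

lemma tagR_pos: "0 \<le> u \<Longrightarrow> tagR u = (2,u)" and tagR_neg: "u < 0 \<Longrightarrow> tagR u = (1,-u)"
  by (auto simp: tagR_def)

lemma tagL_pos: "0 \<le> u \<Longrightarrow> tagL u = (1,u)" and tagL_neg: "u < 0 \<Longrightarrow> tagL u = (0,u)"
  by (auto simp: tagL_def)

lemma tagR_int: "tagR (int y) = (2, int y)" and tagO_int: "tagO (int y) = (2, int y)"
  by (auto simp: tagR_def tagO_def)

lemma tagL_ne2: "tagL a \<noteq> (2,c)"
  by (auto simp: tagL_def)

lemma tagR_eq2: "tagR a = (2,c) \<Longrightarrow> a = c"
  by (auto simp: tagR_def split: if_splits)

lemma tagO_inj: "tagO u = tagO v \<Longrightarrow> u = v"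
  by (metis snd_tagO)

lemma single_iff:
  assumes d: "d \<in> Diag n"
  shows "{u} \<in> d \<longleftrightarrow> u \<in> nodes n \<and> (\<forall>v. (u,v) \<in> sbrel d \<longrightarrow> v = u)"
proof
  assume u: "{u} \<in> d"
  have "u \<in> nodes n" using u Union_diag[OF d] by blast
  moreover have "v = u" if h: "(u,v) \<in> sbrel d" for v
  proof -
    obtain p where p: "p \<in> d" "u \<in> p" "v \<in> p" using h unfolding sbrel_def by blast
    have "disjoint d" using d by (simp add: Diag_def partition_on_def)
    moreover have "p \<inter> {u} \<noteq> {}" using p by blast
    ultimately have "p = {u}" using p(1) u unfolding disjoint_def by meson
    then show ?thesis using p by simp
  qed
  ultimately show "u \<in> nodes n \<and> (\<forall>v. (u,v) \<in> sbrel d \<longrightarrow> v = u)" by blast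
next
  assume h: "u \<in> nodes n \<and> (\<forall>v. (u,v) \<in> sbrel d \<longrightarrow> v = u)"
  then obtain p where p: "p \<in> d" "u \<in> p" using Union_diag[OF d] by blast
  have "p = {u}" using p h by (auto simp: sbrel_def)
  then show "{u} \<in> d" using p by simp
qed

lemma sbrel_iff: "(\<exists>B\<in>d. a \<in> B \<and> b \<in> B) \<longleftrightarrow> (a,b) \<in> sbrel d"
  by (simp add: sbrel_def)

lemma sim:
  assumes d: "d \<in> Diag n" and t: "t \<in> Diag n"
  and stp: "\<And>p q. (p,q) \<in> SR d t \<Longrightarrow> (\<pi> p, \<pi> q) \<in> sbrel d"
  and pO: "\<And>u. u \<in> nodes n \<Longrightarrow> \<pi> (tagO u) = u"
  and bk: "\<And>u v. (u,v) \<in> sbrel d \<Longrightarrow> (tagO u, tagO v) \<in> RR d t"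
  shows "dcomp d t = d"
proof (rule diag_eqI[OF dcomp_Diag[OF d t] d])
  have A: "(\<pi> p, \<pi> q) \<in> sbrel d" if "(p,q) \<in> RR d t" for p q
    using that by (induction rule: trancl_induct) (auto intro: stp sbrel_trans[OF d])
  show "sbrel (dcomp d t) = sbrel d"
  proof (rule set_eqI)
    fix x :: "int \<times> int"
    obtain u v where x: "x = (u,v)" by (meson surj_pair)
    show "x \<in> sbrel (dcomp d t) \<longleftrightarrow> x \<in> sbrel d"
      unfolding sbrel_dcomp[OF d t] Rn_def x using A[of "tagO u" "tagO v"] pO bk sbrel_nodes[OF d]
      by auto
  qed
qed

lemma dmid0:
  assumes a: "d1 \<in> Diag n" "d2 \<in> Diag n"
  and mid: "\<And>j. 1 \<le> j \<Longrightarrow> j \<le> int n \<Longrightarrow> \<exists>w. fst w \<noteq> 1 \<and> ((1,j), w) \<in> RR d1 d2"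
  shows "dmid d1 d2 = 0"
proof -
  have E: "{C \<in> stack_comps d1 d2. \<forall>v\<in>C. fst v = 1} = {}"
  proof (rule ccontr)
    assume "{C \<in> stack_comps d1 d2. \<forall>v\<in>C. fst v = 1} \<noteq> {}"
    then obtain C where C: "C \<in> stack_comps d1 d2" "\<forall>v\<in>C. fst v = 1" by blast
    then obtain v where v: "C = RR d1 d2 `` {v}" "v \<in> stack_verts d1 d2"
      by (auto simp: stack_comps_def elim: quotientE)
    have "v \<in> C" using equiv_class_self[OF RR_equiv[OF a] v(2)] v(1) by simp
    then have f: "fst v = 1" using C by blast
    with v(2) have "1 \<le> snd v \<and> snd v \<le> int n" using verts_iff[OF a] by auto
    then obtain w where w: "fst w \<noteq> 1" "((1, snd v), w) \<in> RR d1 d2" using mid by blast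
    moreover have "v = (1, snd v)" using f by (cases v) auto
    ultimately show False using C v by auto
  qed
  show ?thesis unfolding dmid_def E by simp
qed

subsection \<open>J is a left ideal\<close>

definition Jp :: "nat set \<Rightarrow> int set set \<Rightarrow> bool" where
  "Jp Z d \<longleftrightarrow> (\<exists>z\<in>Z. {int z} \<in> d)
                           \<or> (\<exists>z1\<in>Z. \<exists>z2\<in>Z. z1 \<noteq> z2 \<and> (\<exists>B\<in>d. int z1 \<in> B \<and> int z2 \<in> B))"

lemma J_mod_Jp: "J_mod n Z = dspan n (Jp Z)"
  unfolding J_mod_def Jp_def by simp

lemma SR_from_single:
  assumes d2: "d2 \<in> Diag n" and z: "{int z} \<in> d2" and pq: "((2, int z), q) \<in> SR d1 d2"
  shows "q = (2, int z)"
proof -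
  from pq obtain a b where ab: "(2, int z) = tagR a" "q = tagR b" "(a,b) \<in> sbrel d2"
    unfolding SR_iff using tagL_ne2 by metis
  have "a = int z" using ab(1) tagR_eq2 by metis
  then have "b = int z" using ab(3) single_iff[OF d2] z by blast
  then show ?thesis using ab(2) tagR_int by simp
qed

lemma RR_from_single:
  assumes d2: "d2 \<in> Diag n" and z: "{int z} \<in> d2" and pq: "((2, int z), q) \<in> RR d1 d2"
  shows "q = (2, int z)"
  using pq by (induction rule: trancl_induct) (use SR_from_single[OF d2 z] in auto)

lemma dcomp_single:
  assumes a: "d1 \<in> Diag n" "d2 \<in> Diag n" and z: "{int z} \<in> d2"
  shows "{int z} \<in> dcomp d1 d2"
proof -
  have zn: "int z \<in> nodes n" using z single_iff[OF a(2)] by blast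
  have "v = int z" if "(int z, v) \<in> sbrel (dcomp d1 d2)" for v
  proof -
    have "(tagO (int z), tagO v) \<in> RR d1 d2" using that by (simp add: sbrel_dcomp[OF a] Rn_def)
    then have "tagO v = (2, int z)" using RR_from_single[OF a(2) z] tagO_int by metis
    then show ?thesis using tagO_int tagO_inj by metis
  qed
  then show ?thesis using single_iff[OF dcomp_Diag[OF a]] zn by blast
qed

lemma dcomp_pair:
  assumes a: "d1 \<in> Diag n" "d2 \<in> Diag n" and z: "(int z1, int z2) \<in> sbrel d2"
  shows "(int z1, int z2) \<in> sbrel (dcomp d1 d2)"
proof -
  have "(tagR (int z1), tagR (int z2)) \<in> SR d1 d2" using z by (rule SR_R)
  then have "(tagO (int z1), tagO (int z2)) \<in> RR d1 d2" by (simp add: tagR_int tagO_int r_into_trancl)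
  then show ?thesis using sbrel_nodes[OF a(2) z] by (simp add: sbrel_dcomp[OF a] Rn_def)
qed

lemma J_left:
  assumes a: "d1 \<in> Diag n" "d2 \<in> Diag n" and J: "Jp Z d2"
  shows "Jp Z (dcomp d1 d2)"
  using J dcomp_single[OF a] dcomp_pair[OF a] unfolding Jp_def sbrel_iff by blast

subsection \<open>Merging the blocks that meet Y\<close>

definition touch :: "int set set \<Rightarrow> nat set \<Rightarrow> int \<Rightarrow> bool" where
  "touch d Y u \<longleftrightarrow> (\<exists>y\<in>Y. (u, int y) \<in> sbrel d)"

definition phirel :: "nat \<Rightarrow> nat set \<Rightarrow> int set set \<Rightarrow> (int \<times> int) set" where
  "phirel n Y d = {(u,v). u \<in> nodes n \<and> v \<in> nodes n \<and> ((u,v) \<in> sbrel d \<or> touch d Y u \<and> touch d Y v)}"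

definition phi :: "nat \<Rightarrow> nat set \<Rightarrow> int set set \<Rightarrow> int set set" where
  "phi n Y d = nodes n // phirel n Y d"

lemma phirel_equiv:
  assumes d: "d \<in> Diag n" shows "equiv (nodes n) (phirel n Y d)"
proof (rule equivI)
  show "phirel n Y d \<subseteq> nodes n \<times> nodes n" by (auto simp: phirel_def)
  show "refl_on (nodes n) (phirel n Y d)"
    by (auto simp: refl_on_def phirel_def intro: sbrel_refl[OF d])
  show "sym (phirel n Y d)"
    by (rule symI) (auto simp: phirel_def intro: sbrel_sym)
  have tt: "touch d Y u" if "(u,v) \<in> sbrel d" "touch d Y v" for u v
    using that sbrel_trans[OF d] unfolding touch_def by blast
  show "trans (phirel n Y d)"
  proof (rule transI)
    fix u v w assume "(u,v) \<in> phirel n Y d" "(v,w) \<in> phirel n Y d"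
    then show "(u,w) \<in> phirel n Y d"
      unfolding phirel_def using sbrel_trans[OF d] tt sbrel_sym by blast
  qed
qed

lemma phi_Diag: "d \<in> Diag n \<Longrightarrow> phi n Y d \<in> Diag n"
  by (simp add: phi_def quot_Diag phirel_equiv)

lemma sbrel_phi: "d \<in> Diag n \<Longrightarrow> sbrel (phi n Y d) = phirel n Y d"
  by (simp add: phi_def quot_sbrel phirel_equiv)

lemma sbrel_sub_phirel: "d \<in> Diag n \<Longrightarrow> sbrel d \<subseteq> phirel n Y d"
  using sbrel_nodes by (fastforce simp: phirel_def)

lemma SR_mono: assumes "sbrel d \<subseteq> sbrel d'" shows "SR a d \<subseteq> SR a d'"
proof (rule subrelI)
  fix p q assume "(p,q) \<in> SR a d"
  then show "(p,q) \<in> SR a d'" using assms unfolding SR_iff by blast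
qed

lemma RR_mono_phi: "d \<in> Diag n \<Longrightarrow> RR a d \<subseteq> RR a (phi n Y d)"
  by (intro trancl_mono_subset SR_mono) (simp add: sbrel_phi sbrel_sub_phirel)

lemma phi_SR:
  assumes d: "d \<in> Diag n" and pq: "(p,q) \<in> SR a (phi n Y d)"
  shows "(p,q) \<in> SR a d \<or> ((\<exists>y\<in>Y. (p,(2,int y)) \<in> SR a d) \<and> (\<exists>y\<in>Y. ((2,int y),q) \<in> SR a d))"
proof -
  from pq consider "\<exists>a' b'. p = tagL a' \<and> q = tagL b' \<and> (a',b') \<in> sbrel a"
    | "\<exists>a' b'. p = tagR a' \<and> q = tagR b' \<and> (a',b') \<in> phirel n Y d"
    unfolding SR_iff sbrel_phi[OF d] by blast
  then show ?thesis
  proof cases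
    case 1 then show ?thesis using SR_L by blast
  next
    case 2
    then obtain a' b' where ab: "p = tagR a'" "q = tagR b'" "(a',b') \<in> phirel n Y d" by blast
    show ?thesis
    proof (cases "(a',b') \<in> sbrel d")
      case True then show ?thesis using ab SR_R by blast
    next
      case False
      then have "touch d Y a'" "touch d Y b'" using ab(3) by (auto simp: phirel_def)
      then obtain y1 y2 where y: "y1 \<in> Y" "y2 \<in> Y" "(a', int y1) \<in> sbrel d" "(int y2, b') \<in> sbrel d"
        unfolding touch_def using sbrel_sym by blast
      then show ?thesis using ab SR_R[of a' "int y1" d a] SR_R[of "int y2" b' d a] tagR_int by metis
    qed
  qed
qed

lemma phi_path:
  assumes d: "d \<in> Diag n" and pq: "(p,q) \<in> RR a (phi n Y d)"
  shows "(p,q) \<in> RR a d \<or> ((\<exists>y\<in>Y. (p,(2,int y)) \<in> RR a d) \<and> (\<exists>y\<in>Y. ((2,int y),q) \<in> RR a d))"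
  using pq
proof (induction rule: trancl_induct)
  case (base q)
  then show ?case using phi_SR[OF d] by blast
next
  case (step q r)
  from phi_SR[OF d step(2)] show ?case
  proof
    assume "(q,r) \<in> SR a d"
    then show ?thesis using step(3) by (meson trancl.trancl_into_trancl)
  next
    assume h: "(\<exists>y\<in>Y. (q,(2,int y)) \<in> SR a d) \<and> (\<exists>y\<in>Y. ((2,int y),r) \<in> SR a d)"
    then show ?thesis using step(3) by (meson r_into_trancl trancl.trancl_into_trancl)
  qed
qed

lemma RR_sym: "(p,q) \<in> RR a d \<Longrightarrow> (q,p) \<in> RR a d"
  by (rule symD[OF sym_trancl[OF SR_sym]])

lemma touch_dcomp:
  assumes a: "a \<in> Diag n" "d \<in> Diag n" and Y: "Y \<subseteq> {1..n}"
  shows "touch (dcomp a d) Y u \<longleftrightarrow> u \<in> nodes n \<and> (\<exists>y\<in>Y. (tagO u, (2, int y)) \<in> RR a d)"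
proof -
  have "int y \<in> nodes n" if "y \<in> Y" for y using that Y by (auto simp: nodes_iff)
  then show ?thesis unfolding touch_def sbrel_dcomp[OF a] Rn_def by (auto simp: tagO_int)
qed

lemma phi_comm:
  assumes a: "a \<in> Diag n" "d \<in> Diag n" and Y: "Y \<subseteq> {1..n}"
  shows "dcomp a (phi n Y d) = phi n Y (dcomp a d)"
proof (rule diag_eqI)
  show "dcomp a (phi n Y d) \<in> Diag n" by (simp add: a dcomp_Diag phi_Diag)
  show "phi n Y (dcomp a d) \<in> Diag n" by (simp add: a dcomp_Diag phi_Diag)
  have pd: "phi n Y d \<in> Diag n" by (simp add: a phi_Diag)
  have Yn: "int y \<in> nodes n" if "y \<in> Y" for y using that Y by (auto simp: nodes_iff)
  show "sbrel (dcomp a (phi n Y d)) = sbrel (phi n Y (dcomp a d))"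
  proof (rule set_eqI)
    fix x :: "int \<times> int"
    obtain u v where x: "x = (u,v)" by (meson surj_pair)
    have "(u,v) \<in> Rn n a (phi n Y d) \<longleftrightarrow> (u,v) \<in> phirel n Y (dcomp a d)"
    proof
      assume h: "(u,v) \<in> Rn n a (phi n Y d)"
      then have uv: "u \<in> nodes n" "v \<in> nodes n" "(tagO u, tagO v) \<in> RR a (phi n Y d)"
        by (auto simp: Rn_def)
      from phi_path[OF a(2) uv(3)] show "(u,v) \<in> phirel n Y (dcomp a d)"
      proof
        assume "(tagO u, tagO v) \<in> RR a d"
        then show ?thesis using uv by (auto simp: phirel_def sbrel_dcomp[OF a] Rn_def)
      next
        assume "(\<exists>y\<in>Y. (tagO u,(2,int y)) \<in> RR a d) \<and> (\<exists>y\<in>Y. ((2,int y),tagO v) \<in> RR a d)"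
        then have "touch (dcomp a d) Y u" "touch (dcomp a d) Y v"
          using touch_dcomp[OF a Y] uv RR_sym by blast+
        then show ?thesis using uv by (auto simp: phirel_def)
      qed
    next
      assume h: "(u,v) \<in> phirel n Y (dcomp a d)"
      then have uv: "u \<in> nodes n" "v \<in> nodes n" by (auto simp: phirel_def)
      have mono: "RR a d \<subseteq> RR a (phi n Y d)" using RR_mono_phi[OF a(2)] .
      from h consider "(u,v) \<in> sbrel (dcomp a d)" | "touch (dcomp a d) Y u \<and> touch (dcomp a d) Y v"
        by (auto simp: phirel_def)
      then show "(u,v) \<in> Rn n a (phi n Y d)"
      proof cases
        case 1 then show ?thesis using mono by (auto simp: sbrel_dcomp[OF a] Rn_def)
      next
        case 2
        then obtain y1 y2 where y: "y1 \<in> Y" "y2 \<in> Y" "(tagO u, (2, int y1)) \<in> RR a d"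
          "(tagO v, (2, int y2)) \<in> RR a d"
          using touch_dcomp[OF a Y] by blast
        have "(int y1, int y2) \<in> phirel n Y d"
          using y Yn sbrel_refl[OF a(2)] by (auto simp: phirel_def touch_def)
        then have "((2, int y1), (2, int y2)) \<in> RR a (phi n Y d)"
          using SR_R[of "int y1" "int y2" "phi n Y d" a] tagR_int sbrel_phi[OF a(2)]
          by (metis r_into_trancl)
        moreover have "(tagO u, (2, int y1)) \<in> RR a (phi n Y d)" using y mono by blast
        moreover have "((2, int y2), tagO v) \<in> RR a (phi n Y d)" using y mono RR_sym by blast
        ultimately show ?thesis using uv by (auto simp: Rn_def intro: trancl_trans)
      qed
    qed
    then show "x \<in> sbrel (dcomp a (phi n Y d)) \<longleftrightarrow> x \<in> sbrel (phi n Y (dcomp a d))"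
      unfolding x sbrel_dcomp[OF a(1) pd] sbrel_phi[OF dcomp_Diag[OF a]] .
  qed
qed

lemma phi_dmid:
  assumes a: "a \<in> Diag n" "d \<in> Diag n"
  shows "dmid a (phi n Y d) = dmid a d"
proof -
  have pd: "phi n Y d \<in> Diag n" by (simp add: a phi_Diag)
  have V: "stack_verts a (phi n Y d) = stack_verts a d"
    by (simp add: verts_eq[OF a(1) pd] verts_eq[OF a])
  have key: "RR a (phi n Y d) `` {v} = RR a d `` {v}" if "\<forall>w. (v,w) \<in> RR a d \<longrightarrow> fst w = 1" for v
  proof
    show "RR a (phi n Y d) `` {v} \<subseteq> RR a d `` {v}"
    proof
      fix w assume "w \<in> RR a (phi n Y d) `` {v}"
      then have "(v,w) \<in> RR a (phi n Y d)" by simp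
      from phi_path[OF a(2) this] that show "w \<in> RR a d `` {v}" by fastforce
    qed
    show "RR a d `` {v} \<subseteq> RR a (phi n Y d) `` {v}" using RR_mono_phi[OF a(2)] by blast
  qed
  have "{C \<in> stack_comps a (phi n Y d). \<forall>v\<in>C. fst v = 1} = {C \<in> stack_comps a d. \<forall>v\<in>C. fst v = 1}"
  proof (rule set_eqI, rule iffI)
    fix C assume "C \<in> {C \<in> stack_comps a (phi n Y d). \<forall>v\<in>C. fst v = 1}"
    then have C: "C \<in> stack_verts a d // RR a (phi n Y d)" "\<forall>v\<in>C. fst v = 1"
      by (auto simp: stack_comps_def V)
    then obtain v where v: "C = RR a (phi n Y d) `` {v}" "v \<in> stack_verts a d" by (auto elim: quotientE)
    have "\<forall>w. (v,w) \<in> RR a d \<longrightarrow> fst w = 1" using C(2) v(1) RR_mono_phi[OF a(2)] by blast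
    then have "C = RR a d `` {v}" using key v(1) by simp
    then show "C \<in> {C \<in> stack_comps a d. \<forall>v\<in>C. fst v = 1}"
      using v(2) C(2) by (auto simp: stack_comps_def intro: quotientI)
  next
    fix C assume "C \<in> {C \<in> stack_comps a d. \<forall>v\<in>C. fst v = 1}"
    then have C: "C \<in> stack_verts a d // RR a d" "\<forall>v\<in>C. fst v = 1"
      by (auto simp: stack_comps_def)
    then obtain v where v: "C = RR a d `` {v}" "v \<in> stack_verts a d" by (auto elim: quotientE)
    have "\<forall>w. (v,w) \<in> RR a d \<longrightarrow> fst w = 1" using C(2) v(1) by blast
    then have "C = RR a (phi n Y d) `` {v}" using key v(1) by simp
    then show "C \<in> {C \<in> stack_comps a (phi n Y d). \<forall>v\<in>C. fst v = 1}"
      using v(2) C(2) by (auto simp: stack_comps_def V intro: quotientI)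
  qed
  then show ?thesis by (simp add: dmid_def)
qed

lemma phi_M:
  assumes d: "d \<in> Diag n" and Y: "Y \<subseteq> {1..n}" "Y \<noteq> {}"
  shows "\<exists>B\<in>phi n Y d. int ` Y \<subseteq> B"
proof -
  obtain y0 where y0: "y0 \<in> Y" using Y by blast
  have Yn: "int y \<in> nodes n" if "y \<in> Y" for y using that Y by (auto simp: nodes_iff)
  have "phirel n Y d `` {int y0} \<in> phi n Y d" unfolding phi_def using Yn[OF y0] by (rule quotientI)
  moreover have "int ` Y \<subseteq> phirel n Y d `` {int y0}"
    using Yn y0 sbrel_refl[OF d] by (auto simp: phirel_def touch_def)
  ultimately show ?thesis by blast
qed

lemma phi_id:
  assumes d: "d \<in> Diag n" and B: "\<exists>B\<in>d. int ` Y \<subseteq> B"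
  shows "phi n Y d = d"
proof (rule diag_eqI[OF phi_Diag[OF d] d])
  have "phirel n Y d \<subseteq> sbrel d"
  proof
    fix x assume x: "x \<in> phirel n Y d"
    obtain u v where uv: "x = (u,v)" by (meson surj_pair)
    show "x \<in> sbrel d"
    proof (cases "(u,v) \<in> sbrel d")
      case False
      then have "touch d Y u" "touch d Y v" using x uv by (auto simp: phirel_def)
      then obtain y1 y2 where y: "y1 \<in> Y" "y2 \<in> Y" "(u, int y1) \<in> sbrel d" "(v, int y2) \<in> sbrel d"
        by (auto simp: touch_def)
      have "(int y1, int y2) \<in> sbrel d" using B y(1,2) by (auto simp: sbrel_def)
      then show ?thesis using y uv sbrel_trans[OF d] sbrel_sym by blast
    qed (simp add: uv)
  qed
  then show "sbrel (phi n Y d) = sbrel d" using sbrel_sub_phirel[OF d] sbrel_phi[OF d] by blast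
qed

lemma phi_J:
  assumes d: "d \<in> Diag n" and ZY: "Z \<inter> Y = {}" and J: "Jp Z d"
  shows "Jp Z (phi n Y d)"
proof -
  have s: "{int z} \<in> phi n Y d" if z: "z \<in> Z" "{int z} \<in> d" for z
  proof -
    have zn: "int z \<in> nodes n" and zs: "\<forall>v. (int z, v) \<in> sbrel d \<longrightarrow> v = int z"
      using z single_iff[OF d] by auto
    have "\<not> touch d Y (int z)" using zs z(1) ZY unfolding touch_def by (metis disjoint_iff of_nat_eq_iff)
    then have "\<forall>v. (int z, v) \<in> phirel n Y d \<longrightarrow> v = int z" using zs by (auto simp: phirel_def)
    then show ?thesis using single_iff[OF phi_Diag[OF d]] zn sbrel_phi[OF d] by metis
  qed
  show ?thesis using J s sbrel_sub_phirel[OF d] sbrel_phi[OF d] unfolding Jp_def sbrel_iff by blast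
qed

definition kern :: "nat \<Rightarrow> (int \<Rightarrow> int) \<Rightarrow> (int \<times> int) set" where
  "kern n lab = {(u,v). u \<in> nodes n \<and> v \<in> nodes n \<and> lab u = lab v}"

definition kdiag :: "nat \<Rightarrow> (int \<Rightarrow> int) \<Rightarrow> int set set" where
  "kdiag n lab = nodes n // kern n lab"

lemma kern_equiv: "equiv (nodes n) (kern n lab)"
  by (rule equivI) (auto simp: kern_def refl_on_def sym_def trans_def)

lemma kdiag_Diag: "kdiag n lab \<in> Diag n"
  by (simp add: kdiag_def quot_Diag kern_equiv)

lemma sbrel_kdiag: "sbrel (kdiag n lab) = kern n lab"
  by (simp add: kdiag_def quot_sbrel kern_equiv)

lemma abs_nodes: "w \<in> nodes n \<Longrightarrow> \<bar>w\<bar> \<in> nodes n \<and> 1 \<le> \<bar>w\<bar> \<and> 0 < \<bar>w\<bar>"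
  by (auto simp: nodes_iff)

lemma neg_nodes: "w \<in> nodes n \<Longrightarrow> - w \<in> nodes n"
  by (auto simp: nodes_iff)

lemma nodes_ne0: "w \<in> nodes n \<Longrightarrow> w \<noteq> 0"
  by (auto simp: nodes_iff)

lemma path3: "(p,p') \<in> r\<^sup>= \<Longrightarrow> (p',q') \<in> r \<Longrightarrow> (q',q) \<in> r\<^sup>= \<Longrightarrow> (p,q) \<in> r\<^sup>+"
proof -
  assume a: "(p,p') \<in> r\<^sup>=" "(p',q') \<in> r" "(q',q) \<in> r\<^sup>="
  have "(p,q') \<in> r\<^sup>+"
  proof (cases "p = p'")
    case True then show ?thesis using a(2) by auto
  next
    case False then have "(p,p') \<in> r" using a(1) by auto
    then show ?thesis using a(2) by (meson r_into_trancl trancl_into_trancl2)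
  qed
  then show ?thesis
  proof (cases "q' = q")
    case True then show ?thesis using \<open>(p,q') \<in> r\<^sup>+\<close> by simp
  next
    case False then have "(q',q) \<in> r" using a(3) by auto
    then show ?thesis using \<open>(p,q') \<in> r\<^sup>+\<close> by (meson trancl_into_trancl)
  qed
qed

lemma bk_gen:
  assumes uv: "(u,v) \<in> sbrel d"
    and tu: "0 < u \<Longrightarrow> (u, -u) \<in> sbrel t" and tv: "0 < v \<Longrightarrow> (v, -v) \<in> sbrel t"
    and ne: "u \<noteq> 0" "v \<noteq> 0"
  shows "(tagO u, tagO v) \<in> RR d t"
proof -
  have 1: "(tagO u, tagL u) \<in> (SR d t)\<^sup>="
  proof (cases "u < 0")
    case True then show ?thesis by (simp add: tagO_def tagL_def)
  next
    case False
    then have "(tagR u, tagR (-u)) \<in> SR d t" using tu ne by (intro SR_R) auto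
    then show ?thesis using False ne by (simp add: tagO_def tagL_def tagR_def)
  qed
  have 3: "(tagL v, tagO v) \<in> (SR d t)\<^sup>="
  proof (cases "v < 0")
    case True then show ?thesis by (simp add: tagO_def tagL_def)
  next
    case False
    have "(tagR (-v), tagR v) \<in> SR d t" proof (rule SR_R)
      show "(- v, v) \<in> sbrel t" using tv ne False by (auto intro: sbrel_sym)
    qed
    then show ?thesis using False ne by (simp add: tagO_def tagL_def tagR_def)
  qed
  have 2: "(tagL u, tagL v) \<in> SR d t" using uv by (rule SR_L)
  show ?thesis using path3[OF 1 2 3] .
qed

lemma mid_gen:
  assumes "1 \<le> j" "0 \<le> j'" "(-j, j') \<in> sbrel t"
  shows "((1,j),(2,j')) \<in> RR d t"
proof -
  have "(tagR (-j), tagR j') \<in> SR d t" using assms by (intro SR_R)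
  then show ?thesis using assms by (simp add: tagR_def r_into_trancl)
qed

lemma not_perm_pair:
  assumes "B \<in> d" "a \<in> B" "b \<in> B" "0 < a" "0 < b" "a \<noteq> b"
  shows "\<not> is_perm_diag n d"
proof
  assume "is_perm_diag n d"
  then obtain i j where "1 \<le> i" "B = {- i, j}" using assms(1) unfolding is_perm_diag_def by blast
  then show False using assms by auto
qed

lemma not_perm_single:
  assumes "{a} \<in> d" "0 < a"
  shows "\<not> is_perm_diag n d"
proof
  assume "is_perm_diag n d"
  then obtain i j where "1 \<le> i" "{a} = {- i, j}" using assms(1) unfolding is_perm_diag_def by blast
  then have "- i \<in> {a}" by simp
  then have "a = - i" by simp
  then show False using assms \<open>1 \<le> i\<close> by simp
qed

subsection \<open>The idempotent joining Y\<close>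

definition labY :: "nat set \<Rightarrow> int \<Rightarrow> int" where
  "labY Y v = (if \<bar>v\<bar> \<in> int ` Y then 0 else \<bar>v\<bar>)"

definition eY :: "nat \<Rightarrow> nat set \<Rightarrow> int set set" where
  "eY n Y = kdiag n (labY Y)"

lemma eY_Diag: "eY n Y \<in> Diag n"
  by (simp add: eY_def kdiag_Diag)

lemma eY_block:
  assumes Y: "Y \<subseteq> {1..n}" "Y \<noteq> {}"
  shows "\<exists>B\<in>eY n Y. int ` Y \<subseteq> B"
proof -
  obtain y0 where y0: "y0 \<in> Y" using Y by blast
  have Yn: "int y \<in> nodes n" if "y \<in> Y" for y using that Y by (auto simp: nodes_iff)
  have "kern n (labY Y) `` {int y0} \<in> eY n Y"
    unfolding eY_def kdiag_def using Yn[OF y0] by (rule quotientI)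
  moreover have "int ` Y \<subseteq> kern n (labY Y) `` {int y0}"
    using Yn y0 by (auto simp: kern_def labY_def)
  ultimately show ?thesis by blast
qed

lemma eY_right:
  assumes d: "d \<in> Diag n" and B: "B \<in> d" "int ` Y \<subseteq> B"
  shows "dcomp d (eY n Y) = d \<and> dmid d (eY n Y) = 0"
proof
  let ?t = "eY n Y"
  have t: "?t \<in> Diag n" by (rule eY_Diag)
  have st: "sbrel ?t = kern n (labY Y)" by (simp add: eY_def sbrel_kdiag)
  show "dcomp d ?t = d"
  proof (rule sim[OF d t, where \<pi> = snd])
    fix p q assume "(p,q) \<in> SR d ?t"
    then consider a b where "p = tagL a" "q = tagL b" "(a,b) \<in> sbrel d"
      | a b where "p = tagR a" "q = tagR b" "(a,b) \<in> kern n (labY Y)"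
      unfolding SR_iff st by blast
    then show "(snd p, snd q) \<in> sbrel d"
    proof cases
      case 1 then show ?thesis by (simp add: tagL_def)
    next
      case 2
      then have ab: "a \<in> nodes n" "b \<in> nodes n" "labY Y a = labY Y b" by (auto simp: kern_def)
      have sp: "snd p = \<bar>a\<bar>" "snd q = \<bar>b\<bar>" using 2 by (auto simp: tagR_def)
      show ?thesis
      proof (cases "\<bar>a\<bar> \<in> int ` Y")
        case True
        then have "labY Y b = 0" using ab by (simp add: labY_def)
        then have "\<bar>b\<bar> \<in> int ` Y" using abs_nodes[OF ab(2)] by (auto simp: labY_def split: if_splits)
        then show ?thesis using True B sp by (auto simp: sbrel_def)
      next
        case False
        then have "labY Y b = \<bar>a\<bar>" using ab by (simp add: labY_def)
        then have "\<bar>b\<bar> = \<bar>a\<bar>" using abs_nodes[OF ab(1)] by (auto simp: labY_def split: if_splits)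
        then show ?thesis using sp sbrel_refl[OF d] abs_nodes[OF ab(1)] by simp
      qed
    qed
  next
    fix u show "snd (tagO u) = u" by (rule snd_tagO)
  next
    fix u v assume uv: "(u,v) \<in> sbrel d"
    have n: "u \<in> nodes n" "v \<in> nodes n" using sbrel_nodes[OF d uv] by auto
    show "(tagO u, tagO v) \<in> RR d ?t"
      by (rule bk_gen[OF uv]) (use n neg_nodes nodes_ne0 in \<open>auto simp: st kern_def labY_def\<close>)
  qed
  show "dmid d ?t = 0"
  proof (rule dmid0[OF d t])
    fix j :: int assume j: "1 \<le> j" "j \<le> int n"
    have "(-j, j) \<in> sbrel ?t" using j by (auto simp: st kern_def labY_def nodes_iff)
    then show "\<exists>w. fst w \<noteq> 1 \<and> ((1, j), w) \<in> RR d ?t"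
      using mid_gen[of j j] j by (intro exI[of _ "(2,j)"]) auto
  qed
qed

definition labA :: "nat \<Rightarrow> nat \<Rightarrow> int \<Rightarrow> int" where
  "labA x y v = (if v = int x then 0 else if v = - int x then int y else \<bar>v\<bar>)"

definition tA :: "nat \<Rightarrow> nat \<Rightarrow> nat \<Rightarrow> int set set" where
  "tA n x y = kdiag n (labA x y)"

lemma labA_pos: "0 < u \<Longrightarrow> u \<noteq> int x \<Longrightarrow> labA x y u = u \<and> labA x y (-u) = u"
  by (auto simp: labA_def)

lemma tA_Diag: "tA n x y \<in> Diag n"
  by (simp add: tA_def kdiag_Diag)

lemma tA_single:
  assumes x: "x \<in> {1..n}" and y: "y \<in> {1..n}"
  shows "{int x} \<in> tA n x y"
proof -
  have xn: "int x \<in> nodes n" using x by (auto simp: nodes_iff)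
  have "v = int x" if "(int x, v) \<in> kern n (labA x y)" for v
    using that y abs_nodes[of v n] by (auto simp: kern_def labA_def split: if_splits)
  then show ?thesis using single_iff[OF tA_Diag] xn by (simp add: tA_def sbrel_kdiag)
qed

lemma tA_right:
  assumes d: "d \<in> Diag n" and x: "x \<in> {1..n}" and y: "y \<in> {1..n}" "y \<noteq> x"
    and dx: "{int x} \<in> d"
  shows "dcomp d (tA n x y) = d \<and> dmid d (tA n x y) = 0"
proof
  let ?t = "tA n x y"
  have t: "?t \<in> Diag n" by (rule tA_Diag)
  have st: "sbrel ?t = kern n (labA x y)" by (simp add: tA_def sbrel_kdiag)
  have xs: "\<And>v. (int x, v) \<in> sbrel d \<Longrightarrow> v = int x" using dx single_iff[OF d] by blast
  have xs': "\<And>v. (v, int x) \<in> sbrel d \<Longrightarrow> v = int x" using xs sbrel_sym by blast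
  have yn: "int y \<in> nodes n" and xn: "int x \<in> nodes n" using x y by (auto simp: nodes_iff)
  define \<pi> where "\<pi> = (\<lambda>(k::nat, j::int). if k = 1 \<and> j = int x then int y else j)"
  show "dcomp d ?t = d"
  proof (rule sim[OF d t, where \<pi> = \<pi>])
    fix p q assume "(p,q) \<in> SR d ?t"
    then consider a b where "p = tagL a" "q = tagL b" "(a,b) \<in> sbrel d"
      | a b where "p = tagR a" "q = tagR b" "(a,b) \<in> kern n (labA x y)"
      unfolding SR_iff st by blast
    then show "(\<pi> p, \<pi> q) \<in> sbrel d"
    proof cases
      case 1
      have pl: "\<pi> (tagL c) = (if c = int x then int y else c)" for c
        by (auto simp: \<pi>_def tagL_def)
      show ?thesis
      proof (cases "a = int x \<or> b = int x")
        case True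
        then have "a = int x" "b = int x" using 1 xs xs' by auto
        then show ?thesis using 1 pl sbrel_refl[OF d yn] by simp
      next
        case False then show ?thesis using 1 pl by simp
      qed
    next
      case 2
      then have ab: "a \<in> nodes n" "b \<in> nodes n" "labA x y a = labA x y b" by (auto simp: kern_def)
      have pr: "c \<noteq> int x \<Longrightarrow> c \<in> nodes n \<Longrightarrow> \<pi> (tagR c) = labA x y c" for c
        using nodes_ne0[of c n] by (auto simp: \<pi>_def tagR_def labA_def)
      have l0: "c \<in> nodes n \<Longrightarrow> labA x y c = 0 \<Longrightarrow> c = int x" for c
        using y abs_nodes[of c n] by (auto simp: labA_def split: if_splits)
      show ?thesis
      proof (cases "a = int x \<or> b = int x")
        case True
        have "labA x y (int x) = 0" by (simp add: labA_def)
        then have "a = int x" "b = int x" using True ab l0 by metis+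
        then show ?thesis using 2 sbrel_refl[OF d xn] by (simp add: \<pi>_def tagR_int)
      next
        case False
        have "labA x y a \<in> nodes n" using False yn abs_nodes[OF ab(1)] by (auto simp: labA_def)
        then show ?thesis using False 2 ab pr sbrel_refl[OF d] by simp
      qed
    qed
  next
    fix u assume "u \<in> nodes n" then show "\<pi> (tagO u) = u" by (simp add: \<pi>_def tagO_def)
  next
    fix u v assume uv: "(u,v) \<in> sbrel d"
    have n: "u \<in> nodes n" "v \<in> nodes n" using sbrel_nodes[OF d uv] by auto
    show "(tagO u, tagO v) \<in> RR d ?t"
    proof (cases "u = int x \<or> v = int x")
      case True
      then have "u = int x" "v = int x" using uv xs xs' by auto
      moreover have "(tagR (int x), tagR (int x)) \<in> SR d ?t"
        using xn by (intro SR_R) (simp add: st kern_def)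
      ultimately show ?thesis by (simp add: tagR_int tagO_int r_into_trancl)
    next
      case False
      show ?thesis
      proof (rule bk_gen[OF uv])
        show "(u, - u) \<in> sbrel ?t" if "0 < u"
          using that n False labA_pos[of u x y] neg_nodes by (simp add: st kern_def)
        show "(v, - v) \<in> sbrel ?t" if "0 < v"
          using that n False labA_pos[of v x y] neg_nodes by (simp add: st kern_def)
        show "u \<noteq> 0" "v \<noteq> 0" using n nodes_ne0 by auto
      qed
    qed
  qed
  show "dmid d ?t = 0"
  proof (rule dmid0[OF d t])
    fix j :: int assume j: "1 \<le> j" "j \<le> int n"
    show "\<exists>w. fst w \<noteq> 1 \<and> ((1, j), w) \<in> RR d ?t"
    proof (cases "j = int x")
      case True
      have l: "labA x y (- int x) = int y" "labA x y (int y) = int y" using y x by (auto simp: labA_def)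
      have "- j \<in> nodes n" using j by (simp add: nodes_iff)
      then have "(-j, int y) \<in> sbrel ?t" using True yn l by (simp add: st kern_def)
      then show ?thesis using mid_gen[of j "int y"] j by (intro exI[of _ "(2,int y)"]) auto
    next
      case False
      have "- j \<in> nodes n" "j \<in> nodes n" using j by (simp_all add: nodes_iff)
      then have "(-j, j) \<in> sbrel ?t" using False j labA_pos[of j x y] by (simp add: st kern_def)
      then show ?thesis using mid_gen[of j j] j by (intro exI[of _ "(2,j)"]) auto
    qed
  qed
qed

definition ind :: "int set set \<Rightarrow> int set set \<Rightarrow> 'a::comm_ring_1" where
  "ind d = (\<lambda>x. if x = d then 1 else 0)"

lemma pmult_alt:
  "pmult n \<delta> f g = (\<lambda>x. \<Sum>d1\<in>Diag n. \<Sum>d2\<in>Diag n.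
      if dcomp d1 d2 = x then f d1 * g d2 * \<delta> ^ dmid d1 d2 else 0)"
proof (rule ext)
  fix x
  have e: "{(d1, d2). d1 \<in> Diag n \<and> d2 \<in> Diag n \<and> dcomp d1 d2 = x}
        = {p \<in> Diag n \<times> Diag n. dcomp (fst p) (snd p) = x}" by auto
  have "pmult n \<delta> f g x = (\<Sum>p\<in>{p \<in> Diag n \<times> Diag n. dcomp (fst p) (snd p) = x}.
          f (fst p) * g (snd p) * \<delta> ^ dmid (fst p) (snd p))"
    unfolding pmult_def e by (rule sum.cong) auto
  also have "\<dots> = (\<Sum>p\<in>Diag n \<times> Diag n. if dcomp (fst p) (snd p) = x then
          f (fst p) * g (snd p) * \<delta> ^ dmid (fst p) (snd p) else 0)"
    by (rule sum.inter_filter) (simp add: finite_Diag)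
  also have "\<dots> = (\<Sum>d1\<in>Diag n. \<Sum>d2\<in>Diag n.
      if dcomp d1 d2 = x then f d1 * g d2 * \<delta> ^ dmid d1 d2 else 0)"
    by (simp add: sum.cartesian_product split_def)
  finally show "pmult n \<delta> f g x = (\<Sum>d1\<in>Diag n. \<Sum>d2\<in>Diag n.
      if dcomp d1 d2 = x then f d1 * g d2 * \<delta> ^ dmid d1 d2 else 0)" .
qed

lemma pmult_ind:
  assumes d: "d \<in> Diag n" and t: "t \<in> Diag n"
  shows "pmult n \<delta> (ind d) (ind t) = pscal (\<delta> ^ dmid d t) (ind (dcomp d t))"
proof (rule ext)
  fix x
  have "pmult n \<delta> (ind d) (ind t) x = (\<Sum>d1\<in>Diag n. \<Sum>d2\<in>Diag n.
      if d1 = d then (if d2 = t then (if dcomp d1 d2 = x then \<delta> ^ dmid d1 d2 else 0) else 0) else 0)"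
    unfolding pmult_alt by (intro sum.cong refl) (auto simp: ind_def)
  also have "\<dots> = (\<Sum>d1\<in>Diag n. if d1 = d then (if dcomp d1 t = x then \<delta> ^ dmid d1 t else 0) else 0)"
    by (rule sum.cong[OF refl]) (simp add: sum.delta[OF finite_Diag] t)
  also have "\<dots> = (if dcomp d t = x then \<delta> ^ dmid d t else 0)"
    by (simp add: sum.delta[OF finite_Diag] d)
  finally show "pmult n \<delta> (ind d) (ind t) x = pscal (\<delta> ^ dmid d t) (ind (dcomp d t)) x"
    by (auto simp: pscal_def ind_def)
qed

lemma eps_ind:
  assumes "\<not> is_perm_diag n d"
  shows "eps n (ind d) = 0"
  unfolding eps_def using assms by (intro sum.neutral) (auto simp: ind_def)

lemma ind_dspan: "d \<in> Diag n \<Longrightarrow> P d \<Longrightarrow> ind d \<in> dspan n P"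
  by (auto simp: dspan_def PA_def ind_def)

lemma rsub_sum:
  assumes V: "rsubmod n V" and F: "finite F" and g: "\<forall>d\<in>F. g d \<in> V"
  shows "(\<lambda>x. \<Sum>d\<in>F. c d * g d x) \<in> V"
  using F g
proof (induction F rule: finite_induct)
  case empty
  then show ?case using V by (simp add: rsubmod_def pzero_def)
next
  case (insert a F)
  have "(\<lambda>x. \<Sum>d\<in>insert a F. c d * g d x) = padd (pscal (c a) (g a)) (\<lambda>x. \<Sum>d\<in>F. c d * g d x)"
    using insert by (auto simp: padd_def pscal_def)
  moreover have "pscal (c a) (g a) \<in> V" using V insert by (auto simp: rsubmod_def)
  moreover have "(\<lambda>x. \<Sum>d\<in>F. c d * g d x) \<in> V" using insert by auto
  ultimately show ?case using V by (auto simp: rsubmod_def)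
qed

lemma decomp:
  assumes f: "f \<in> dspan n P"
  shows "f = (\<lambda>x. \<Sum>d\<in>{d \<in> Diag n. P d}. f d * ind d x)"
proof (rule ext)
  fix x
  have fin: "finite {d \<in> Diag n. P d}" using finite_Diag by simp
  have "(\<Sum>d\<in>{d \<in> Diag n. P d}. f d * ind d x) = (\<Sum>d\<in>{d \<in> Diag n. P d}. if x = d then f d else 0)"
    by (intro sum.cong refl) (auto simp: ind_def)
  also have "\<dots> = (if x \<in> {d \<in> Diag n. P d} then f x else 0)" using fin by simp
  also have "\<dots> = f x" using f by (auto simp: dspan_def PA_def)
  finally show "f x = (\<Sum>d\<in>{d \<in> Diag n. P d}. f d * ind d x)" by simp
qed

lemma pzero_dspan: "pzero \<in> dspan n P"
  by (simp add: dspan_def PA_def pzero_def)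

lemma tensor_gen:
  assumes H: "\<And>d. d \<in> Diag n \<Longrightarrow> P d \<Longrightarrow>
      \<exists>t\<in>Diag n. P t \<and> dcomp d t = d \<and> dmid d t = 0 \<and> \<not> is_perm_diag n d"
    and N: "pzero \<in> N"
  shows "triv_tensor_quot_zero n \<delta> (dspan n P :: (int set set \<Rightarrow> 'a::comm_ring_1) set) N"
  unfolding triv_tensor_quot_zero_def
proof
  fix m :: "int set set \<Rightarrow> 'a" assume m: "m \<in> dspan n P"
  let ?S = "{pdiff (pmult n \<delta> a m) (pscal (eps n a) m) | a m. a \<in> PA n \<and> m \<in> (dspan n P :: (int set set \<Rightarrow> 'a) set)}"
  have "m \<in> rspan n ?S"
    unfolding rspan_def
  proof (rule InterI)
    fix V assume "V \<in> {V. rsubmod n V \<and> ?S \<subseteq> V}"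
    then have V: "rsubmod n V" "?S \<subseteq> V" by auto
    have indV: "ind d \<in> V" if d: "d \<in> {d \<in> Diag n. P d}" for d
    proof -
      obtain t where t: "t \<in> Diag n" "P t" "dcomp d t = d" "dmid d t = 0" "\<not> is_perm_diag n d"
        using H d by blast
      have "pdiff (pmult n \<delta> (ind d) (ind t)) (pscal (eps n (ind d)) (ind t)) = (ind d :: _ \<Rightarrow> 'a)"
        using d t by (auto simp: pmult_ind eps_ind pdiff_def pscal_def)
      moreover have "ind d \<in> PA n" using d by (auto simp: PA_def ind_def)
      moreover have "ind t \<in> dspan n P" using t by (simp add: ind_dspan)
      ultimately have "ind d \<in> ?S" by (metis (mono_tags, lifting) mem_Collect_eq)
      then show ?thesis using V by auto
    qed
    have "(\<lambda>x. \<Sum>d\<in>{d \<in> Diag n. P d}. m d * ind d x) \<in> V"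
      by (rule rsub_sum[OF V(1)], simp add: finite_Diag, use indV in blast)
    then show "m \<in> V" using decomp[OF m] by simp
  qed
  moreover have "m = padd pzero m" by (simp add: padd_def pzero_def)
  ultimately show "m \<in> setplus N (rspan n ?S)" using N unfolding setplus_def by blast
qed

definition Phi :: "nat \<Rightarrow> nat set \<Rightarrow> (int set set \<Rightarrow> 'a::comm_ring_1) \<Rightarrow> int set set \<Rightarrow> 'a" where
  "Phi n Y f = (\<lambda>d'. \<Sum>d\<in>Diag n. if phi n Y d = d' then f d else 0)"

definition Mp :: "nat set \<Rightarrow> int set set \<Rightarrow> bool" where
  "Mp Y d \<longleftrightarrow> (\<exists>B\<in>d. int ` Y \<subseteq> B)"

lemma M_mod_Mp: "M_mod n Y = dspan n (Mp Y)"
  unfolding M_mod_def Mp_def by simp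

lemma Phi_PA: "Phi n Y f \<in> PA n"
  unfolding PA_def Phi_def by (auto intro!: sum.neutral simp: phi_Diag)

lemma Phi_M:
  assumes Y: "Y \<subseteq> {1..n}" "Y \<noteq> {}"
  shows "Phi n Y f \<in> dspan n (Mp Y)"
proof -
  have "Mp Y d'" if "Phi n Y f d' \<noteq> 0" for d'
  proof -
    have "\<exists>d\<in>Diag n. (if phi n Y d = d' then f d else 0) \<noteq> 0"
    proof (rule ccontr)
      assume "\<not> (\<exists>d\<in>Diag n. (if phi n Y d = d' then f d else 0) \<noteq> 0)"
      then have "Phi n Y f d' = 0" unfolding Phi_def by (intro sum.neutral) blast
      with that show False by simp
    qed
    then obtain d where "d \<in> Diag n" "phi n Y d = d'" by (metis (full_types))
    then show ?thesis using phi_M[OF _ Y] by (auto simp: Mp_def)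
  qed
  then show ?thesis using Phi_PA by (auto simp: dspan_def)
qed

lemma Phi_fix:
  assumes m: "m \<in> dspan n (Mp Y)"
  shows "Phi n Y m = m"
proof (rule ext)
  fix x
  have "(\<Sum>d\<in>Diag n. if phi n Y d = x then m d else 0) = (\<Sum>d\<in>Diag n. if d = x then m d else 0)"
  proof (rule sum.cong[OF refl])
    fix d assume d: "d \<in> Diag n"
    show "(if phi n Y d = x then m d else 0) = (if d = x then m d else 0)"
    proof (cases "m d = 0")
      case False
      then have "Mp Y d" using m by (auto simp: dspan_def)
      then have "phi n Y d = d" using phi_id[OF d] by (auto simp: Mp_def)
      then show ?thesis by simp
    next
      case True then show ?thesis by auto
    qed
  qed
  also have "\<dots> = m x" using m by (auto simp: finite_Diag dspan_def PA_def)
  finally show "Phi n Y m x = m x" by (simp add: Phi_def)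
qed

lemma Phi_diff: "Phi n Y (pdiff f g) = pdiff (Phi n Y f) (Phi n Y g)"
  unfolding Phi_def pdiff_def by (rule ext) (simp only: sum_subtractf[symmetric], rule sum.cong, auto)

lemma Phi_add: "Phi n Y (padd f g) = padd (Phi n Y f) (Phi n Y g)"
  unfolding Phi_def padd_def by (rule ext) (simp only: sum.distrib[symmetric], rule sum.cong, auto)

lemma Phi_scal: "Phi n Y (pscal r f) = pscal r (Phi n Y f)"
  unfolding Phi_def pscal_def by (rule ext) (simp only: sum_distrib_left, rule sum.cong, auto)

lemma Phi_zero: "Phi n Y pzero = pzero"
  unfolding Phi_def pzero_def by simp

lemma pmult_PA: "pmult n \<delta> a c \<in> PA n"
  unfolding PA_def pmult_alt by (auto intro!: sum.neutral simp: dcomp_Diag)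

lemma J_mult:
  assumes j: "j \<in> dspan n (Jp Z)"
  shows "pmult n \<delta> a j \<in> dspan n (Jp Z)"
proof -
  have "pmult n \<delta> a j x = 0" if x: "\<not> Jp Z x" for x
    unfolding pmult_alt
  proof (intro sum.neutral ballI)
    fix d1 d2 assume d: "d1 \<in> Diag n" "d2 \<in> Diag n"
    show "(if dcomp d1 d2 = x then a d1 * j d2 * \<delta> ^ dmid d1 d2 else 0) = 0"
    proof (cases "j d2 = 0")
      case False
      then have "Jp Z d2" using j by (auto simp: dspan_def)
      then have "dcomp d1 d2 \<noteq> x" using J_left[OF d] x by auto
      then show ?thesis by simp
    qed simp
  qed
  then show ?thesis using pmult_PA by (auto simp: dspan_def)
qed

lemma Phi_J:
  assumes j: "j \<in> dspan n (Jp Z)" and ZY: "Z \<inter> Y = {}"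
  shows "Phi n Y j \<in> dspan n (Jp Z)"
proof -
  have "Jp Z d'" if "Phi n Y j d' \<noteq> 0" for d'
  proof -
    have "\<exists>d\<in>Diag n. (if phi n Y d = d' then j d else 0) \<noteq> 0"
    proof (rule ccontr)
      assume "\<not> (\<exists>d\<in>Diag n. (if phi n Y d = d' then j d else 0) \<noteq> 0)"
      then have "Phi n Y j d' = 0" unfolding Phi_def by (intro sum.neutral) blast
      with that show False by simp
    qed
    then obtain d where d: "d \<in> Diag n" "phi n Y d = d'" "j d \<noteq> 0" by (metis (full_types))
    then have "Jp Z d" using j by (auto simp: dspan_def)
    then show ?thesis using phi_J[OF d(1) ZY] d by simp
  qed
  then show ?thesis using Phi_PA by (auto simp: dspan_def)
qed

lemma dspan_add: "u \<in> dspan n P \<Longrightarrow> v \<in> dspan n P \<Longrightarrow> padd u v \<in> dspan n P"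
  apply (auto simp: dspan_def PA_def padd_def)
  subgoal for d by (cases "u d = 0") auto
  done

lemma dspan_scal: "u \<in> dspan n P \<Longrightarrow> pscal r u \<in> dspan n P"
  apply (auto simp: dspan_def PA_def pscal_def)
  subgoal for d by (cases "u d = 0") auto
  done

lemma Phi_pmult:
  assumes Y: "Y \<subseteq> {1..n}"
  shows "Phi n Y (pmult n \<delta> a c) = pmult n \<delta> a (Phi n Y c)"
proof (rule ext)
  fix x
  let ?D = "Diag n"
  let ?F = "\<lambda>d1 d2. a d1 * c d2 * \<delta> ^ dmid d1 d2"
  have fin: "finite ?D" by (rule finite_Diag)
  have "Phi n Y (pmult n \<delta> a c) x =
     (\<Sum>d\<in>?D. \<Sum>d1\<in>?D. \<Sum>d2\<in>?D. if dcomp d1 d2 = d then (if phi n Y d = x then ?F d1 d2 else 0) else 0)"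
    unfolding Phi_def pmult_alt
    apply (rule sum.cong[OF refl])
    subgoal for d by (cases "phi n Y d = x") (simp_all cong: if_cong)
    done
  also have "\<dots> = (\<Sum>d1\<in>?D. \<Sum>d2\<in>?D. \<Sum>d\<in>?D. if dcomp d1 d2 = d then (if phi n Y d = x then ?F d1 d2 else 0) else 0)"
  proof -
    have "(\<Sum>d\<in>?D. \<Sum>d1\<in>?D. \<Sum>d2\<in>?D. if dcomp d1 d2 = d then (if phi n Y d = x then ?F d1 d2 else 0) else 0)
       = (\<Sum>d1\<in>?D. \<Sum>d\<in>?D. \<Sum>d2\<in>?D. if dcomp d1 d2 = d then (if phi n Y d = x then ?F d1 d2 else 0) else 0)"
      by (rule sum.swap)
    also have "\<dots> = (\<Sum>d1\<in>?D. \<Sum>d2\<in>?D. \<Sum>d\<in>?D. if dcomp d1 d2 = d then (if phi n Y d = x then ?F d1 d2 else 0) else 0)"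
      by (rule sum.cong[OF refl], rule sum.swap)
    finally show ?thesis .
  qed
  also have "\<dots> = (\<Sum>d1\<in>?D. \<Sum>d2\<in>?D. if phi n Y (dcomp d1 d2) = x then ?F d1 d2 else 0)"
    by (intro sum.cong refl) (simp add: fin dcomp_Diag)
  also have "\<dots> = (\<Sum>d1\<in>?D. \<Sum>d2\<in>?D. if dcomp d1 (phi n Y d2) = x then a d1 * c d2 * \<delta> ^ dmid d1 (phi n Y d2) else 0)"
    by (intro sum.cong refl) (simp add: phi_comm[OF _ _ Y] phi_dmid)
  also have "\<dots> = (\<Sum>d1\<in>?D. \<Sum>d2\<in>?D. \<Sum>e\<in>?D. if phi n Y d2 = e then (if dcomp d1 e = x then a d1 * c d2 * \<delta> ^ dmid d1 e else 0) else 0)"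
    by (intro sum.cong refl) (simp add: fin phi_Diag)
  also have "\<dots> = (\<Sum>d1\<in>?D. \<Sum>e\<in>?D. \<Sum>d2\<in>?D. if phi n Y d2 = e then (if dcomp d1 e = x then a d1 * c d2 * \<delta> ^ dmid d1 e else 0) else 0)"
    by (rule sum.cong[OF refl], rule sum.swap)
  also have "\<dots> = pmult n \<delta> a (Phi n Y c) x"
    unfolding pmult_alt Phi_def
  proof (intro sum.cong refl)
    fix d1 e
    show "(\<Sum>d2\<in>?D. if phi n Y d2 = e then (if dcomp d1 e = x then a d1 * c d2 * \<delta> ^ dmid d1 e else 0) else 0) =
      (if dcomp d1 e = x then a d1 * (\<Sum>d\<in>?D. if phi n Y d = e then c d else 0) * \<delta> ^ dmid d1 e else 0)"
    proof (cases "dcomp d1 e = x")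
      case True
      have "a d1 * (\<Sum>d\<in>?D. if phi n Y d = e then c d else 0) * \<delta> ^ dmid d1 e
          = (\<Sum>d\<in>?D. a d1 * (if phi n Y d = e then c d else 0) * \<delta> ^ dmid d1 e)"
        by (simp add: sum_distrib_left sum_distrib_right)
      then show ?thesis using True by (simp cong: if_cong, intro sum.cong refl, simp)
    next
      case False then show ?thesis by (simp cong: if_cong)
    qed
  qed
  finally show "Phi n Y (pmult n \<delta> a c) x = pmult n \<delta> a (Phi n Y c) x" .
qed

lemma summand:
  assumes YX: "Y \<subseteq> X" and X: "X \<subseteq> {1..n}" and Y0: "Y \<noteq> {}"
  shows "direct_summand_quot n \<delta> (M_mod n Y :: (int set set \<Rightarrow> 'a::comm_ring_1) set) (J_mod n (X - Y))"
proof -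
  have Y: "Y \<subseteq> {1..n}" using YX X by blast
  have ZY: "(X - Y) \<inter> Y = {}" by blast
  let ?J = "dspan n (Jp (X - Y)) :: (int set set \<Rightarrow> 'a) set"
  let ?M = "dspan n (Mp Y) :: (int set set \<Rightarrow> 'a) set"
  define C where "C = {c \<in> PA n. Phi n Y c \<in> ?J}"
  have JPA: "?J \<subseteq> PA n" by (auto simp: dspan_def)
  have zJ: "pzero \<in> ?J" by (rule pzero_dspan)
  have rs: "rsubmod n C"
    unfolding rsubmod_def
  proof (intro conjI ballI allI)
    show "C \<subseteq> PA n" by (auto simp: C_def)
    have p0: "Phi n Y (pzero :: int set set \<Rightarrow> 'a) = pzero" by (rule Phi_zero)
    have p1: "(pzero :: int set set \<Rightarrow> 'a) \<in> PA n" by (simp add: PA_def pzero_def)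
    show "pzero \<in> C" using zJ p0 p1 unfolding C_def by simp
    fix u v assume u: "u \<in> C" and v: "v \<in> C"
    have "Phi n Y (padd u v) \<in> ?J" using u v by (simp add: C_def Phi_add dspan_add)
    moreover have "padd u v \<in> PA n" using u v by (auto simp: C_def PA_def padd_def)
    ultimately show "padd u v \<in> C" by (simp add: C_def)
  next
    fix r u assume u: "u \<in> C"
    have "Phi n Y (pscal r u) \<in> ?J" using u by (simp add: C_def Phi_scal dspan_scal)
    moreover have "pscal r u \<in> PA n" using u by (auto simp: C_def PA_def pscal_def)
    ultimately show "pscal r u \<in> C" by (simp add: C_def)
  qed
  have ls: "left_submod n \<delta> C"
    unfolding left_submod_def using rs
    by (auto simp: C_def pmult_PA Phi_pmult[OF Y] J_mult)
  have JC: "?J \<subseteq> C" unfolding C_def using JPA Phi_J[OF _ ZY] by auto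
  have dec: "\<exists>m\<in>?M. \<exists>c\<in>C. pdiff f (padd m c) \<in> ?J" if f: "f \<in> PA n" for f
  proof -
    let ?m = "Phi n Y f"
    let ?c = "pdiff f ?m"
    have m: "?m \<in> ?M" by (rule Phi_M[OF Y Y0])
    have "Phi n Y ?c = pdiff ?m ?m" by (simp add: Phi_diff Phi_fix[OF m])
    also have "\<dots> = pzero" by (simp add: pdiff_def pzero_def)
    finally have pc: "Phi n Y ?c = pzero" .
    have cPA: "?c \<in> PA n" using f Phi_PA[of n Y f] by (auto simp: PA_def pdiff_def)
    then have "?c \<in> C" using pc zJ by (simp add: C_def)
    moreover have "pdiff f (padd ?m ?c) = pzero" by (simp add: pdiff_def padd_def pzero_def)
    ultimately show ?thesis using m zJ by metis
  qed
  have int: "m \<in> ?J" if "m \<in> ?M" "m \<in> C" for m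
    using that Phi_fix[OF that(1)] by (auto simp: C_def)
  show ?thesis unfolding direct_summand_quot_def M_mod_Mp J_mod_Jp
    using ls JC dec int by blast
qed

lemma two_elems:
  assumes "card Y \<ge> 2"
  obtains y1 y2 where "y1 \<in> Y" "y2 \<in> Y" "y1 \<noteq> y2"
proof -
  have "Y \<noteq> {}" using assms by auto
  then obtain y1 where y1: "y1 \<in> Y" by blast
  have "Y - {y1} \<noteq> {}"
  proof
    assume "Y - {y1} = {}"
    then have "Y = {y1}" using y1 by blast
    then show False using assms by simp
  qed
  then obtain y2 where "y2 \<in> Y - {y1}" by blast
  then show ?thesis using that y1 by blast
qed

theorem lemma4p5:
  fixes \<delta> :: "'a::comm_ring_1" and n :: nat
  shows "(\<forall>X x. X \<subseteq> {1..n} \<and> x \<in> X \<and> n \<ge> 2 \<longrightarrow>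
            triv_tensor_quot_zero n \<delta> (A_mod n x :: (int set set \<Rightarrow> 'a) set)
              (A_mod n x \<inter> J_mod n (X - {x})))
       \<and> (\<forall>X x. X \<subseteq> {1..n} \<and> x \<in> X \<longrightarrow>
            triv_tensor_quot_zero n \<delta> (B_mod n X x :: (int set set \<Rightarrow> 'a) set)
              (B_mod n X x \<inter> J_mod n (X - {x})))
       \<and> (\<forall>X Y. Y \<subseteq> X \<and> X \<subseteq> {1..n} \<and> card Y \<ge> 2 \<longrightarrow>
            triv_tensor_quot_zero n \<delta> (M_mod n Y :: (int set set \<Rightarrow> 'a) set)
              (M_mod n Y \<inter> J_mod n (X - Y))
          \<and> direct_summand_quot n \<delta> (M_mod n Y :: (int set set \<Rightarrow> 'a) set) (J_mod n (X - Y)))"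
proof (intro conjI allI impI)
  fix X x assume h: "X \<subseteq> {1..n} \<and> x \<in> X \<and> n \<ge> 2"
  then have x: "x \<in> {1..n}" by blast
  define y where "y = (if x = 1 then 2 else (1::nat))"
  have y: "y \<in> {1..n}" "y \<noteq> x" using h x by (auto simp: y_def)
  have A: "A_mod n x = dspan n (\<lambda>d. {int x} \<in> d)" by (simp add: A_mod_def)
  show "triv_tensor_quot_zero n \<delta> (A_mod n x :: (int set set \<Rightarrow> 'a) set)
              (A_mod n x \<inter> J_mod n (X - {x}))"
    unfolding A
  proof (rule tensor_gen)
    fix d assume d: "d \<in> Diag n" "{int x} \<in> d"
    have "tA n x y \<in> Diag n" "{int x} \<in> tA n x y" using tA_Diag tA_single[OF x y(1)] by auto
    moreover have "dcomp d (tA n x y) = d \<and> dmid d (tA n x y) = 0" using tA_right[OF d(1) x y d(2)] .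
    moreover have "\<not> is_perm_diag n d" using not_perm_single[OF d(2)] x by auto
    ultimately show "\<exists>t\<in>Diag n. {int x} \<in> t \<and> dcomp d t = d \<and> dmid d t = 0 \<and> \<not> is_perm_diag n d"
      by blast
  next
    show "pzero \<in> dspan n (\<lambda>d. {int x} \<in> d) \<inter> J_mod n (X - {x})"
      by (simp add: pzero_dspan J_mod_Jp)
  qed
next
  fix X x assume h: "X \<subseteq> {1..n} \<and> x \<in> X"
  then have x: "x \<in> {1..n}" by blast
  show "triv_tensor_quot_zero n \<delta> (B_mod n X x :: (int set set \<Rightarrow> 'a) set)
              (B_mod n X x \<inter> J_mod n (X - {x}))"
    unfolding B_mod_def
  proof (rule tensor_gen)
    fix d assume d: "d \<in> Diag n" "\<exists>y\<in>X. y \<noteq> x \<and> (\<exists>B\<in>d. int x \<in> B \<and> int y \<in> B)"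
    then obtain y B where yB: "y \<in> X" "y \<noteq> x" "B \<in> d" "int x \<in> B" "int y \<in> B" by blast
    have Y: "{x,y} \<subseteq> {1..n}" "{x,y} \<noteq> {}" using yB h by auto
    have "int ` {x,y} \<subseteq> B" using yB by auto
    then have c1: "dcomp d (eY n {x,y}) = d \<and> dmid d (eY n {x,y}) = 0" using eY_right[OF d(1) yB(3)] by blast
    obtain B' where B': "B' \<in> eY n {x,y}" "int ` {x,y} \<subseteq> B'" using eY_block[OF Y] by blast
    then have Bx: "int x \<in> B'" "int y \<in> B'" by auto
    have c2: "\<exists>y'\<in>X. y' \<noteq> x \<and> (\<exists>B\<in>eY n {x,y}. int x \<in> B \<and> int y' \<in> B)"
      using yB(1,2) B'(1) Bx by blast
    have pos: "0 < int x" "0 < int y" "int x \<noteq> int y" using x Y yB(2) by auto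
    have c3: "\<not> is_perm_diag n d" using not_perm_pair[OF yB(3,4,5) pos] .
    show "\<exists>t\<in>Diag n. (\<exists>y\<in>X. y \<noteq> x \<and> (\<exists>B\<in>t. int x \<in> B \<and> int y \<in> B))
        \<and> dcomp d t = d \<and> dmid d t = 0 \<and> \<not> is_perm_diag n d"
    proof (rule bexI[of _ "eY n {x,y}"])
      show "eY n {x,y} \<in> Diag n" by (rule eY_Diag)
    qed (use c1 c2 c3 in simp)
  next
    show "pzero \<in> dspan n (\<lambda>d. \<exists>y\<in>X. y \<noteq> x \<and> (\<exists>B\<in>d. int x \<in> B \<and> int y \<in> B)) \<inter> J_mod n (X - {x})"
      by (simp add: pzero_dspan J_mod_Jp)
  qed
next
  fix X Y assume h: "Y \<subseteq> X \<and> X \<subseteq> {1..n} \<and> 2 \<le> card Y"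
  have Y: "Y \<subseteq> {1..n}" "Y \<noteq> {}" using h by auto
  obtain y1 y2 where y12: "y1 \<in> Y" "y2 \<in> Y" "y1 \<noteq> y2" using two_elems h by metis
  show "triv_tensor_quot_zero n \<delta> (M_mod n Y :: (int set set \<Rightarrow> 'a) set)
              (M_mod n Y \<inter> J_mod n (X - Y))"
    unfolding M_mod_Mp
  proof (rule tensor_gen)
    fix d assume d: "d \<in> Diag n" "Mp Y d"
    then obtain B where B: "B \<in> d" "int ` Y \<subseteq> B" by (auto simp: Mp_def)
    have c1: "dcomp d (eY n Y) = d \<and> dmid d (eY n Y) = 0" using eY_right[OF d(1) B] .
    have c2: "Mp Y (eY n Y)" using eY_block[OF Y] by (simp add: Mp_def)
    have in1: "int y1 \<in> B" "int y2 \<in> B" using B(2) y12 by auto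
    have pos: "0 < int y1" "0 < int y2" "int y1 \<noteq> int y2" using y12 Y by auto
    have c3: "\<not> is_perm_diag n d" using not_perm_pair[OF B(1) in1 pos] .
    show "\<exists>t\<in>Diag n. Mp Y t \<and> dcomp d t = d \<and> dmid d t = 0 \<and> \<not> is_perm_diag n d"
    proof (rule bexI[of _ "eY n Y"])
      show "eY n Y \<in> Diag n" by (rule eY_Diag)
    qed (use c1 c2 c3 in simp)
  next
    show "pzero \<in> dspan n (Mp Y) \<inter> J_mod n (X - Y)"
      by (simp add: pzero_dspan J_mod_Jp)
  qed
  show "direct_summand_quot n \<delta> (M_mod n Y :: (int set set \<Rightarrow> 'a) set) (J_mod n (X - Y))"
    using summand[of Y X n \<delta>] h Y by blast
qed

end
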